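(* Let $T$ be a ditree and let $S$ be a source set or a sink set of $T$. Then every geodetic set of $T$ contains at least one vertex of $S$.
   Context: All digraphs are finite, without loops or parallel arcs. The underlying undirected graph of a digraph is obtained by forgetting orientations and deleting parallel edges. A ditree is a digraph whose underlying undirected graph is a tree (it may contain $2$-cycles, i.e., pairs of opposite arcs $uv,vu$). For $S\subseteq V(D)$, $N^-(S)$ (resp. $N^+(S)$) is the set of vertices outside $S$ having an arc to (resp. from) some vertex of $S$. A source set is a maximal strongly connected component $S$ of $D$ with $N^-(S)\setminus S=\emptyset$; a sink set is a maximal strongly connected component $S$ with $N^+(S)\setminus S=\emptyset$. For vertices $u,v$, $I(u,v)$ is the set of vertices lying on some shortest directed path from $u$ to $v$; for $S\subseteq V(D)$, $I(S)=\bigcup_{u,v\in S}(I(u,v)\cup I(v,u))$. A geodetic set of $D$ is a set $S\subseteq V(D)$ with $I(S)=V(D)$. *)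

theory Defs
  imports Main
begin

definition digraph :: "'a set \<Rightarrow> ('a \<times> 'a) set \<Rightarrow> bool" where
  "digraph V A \<longleftrightarrow> finite V \<and> A \<subseteq> V \<times> V \<and> (\<forall>v. (v, v) \<notin> A)"

definition uadj :: "('a \<times> 'a) set \<Rightarrow> 'a \<Rightarrow> 'a \<Rightarrow> bool" where
  "uadj A u v \<longleftrightarrow> (u, v) \<in> A \<or> (v, u) \<in> A"

definition ucycle :: "('a \<times> 'a) set \<Rightarrow> 'a list \<Rightarrow> bool" where
  "ucycle A c \<longleftrightarrow> length c \<ge> 3 \<and> distinct c
     \<and> (\<forall>i. Suc i < length c \<longrightarrow> uadj A (c ! i) (c ! Suc i))
     \<and> uadj A (last c) (hd c)"

(* underlying undirected graph is a tree: nonempty, connected, acyclic *)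
definition ditree :: "'a set \<Rightarrow> ('a \<times> 'a) set \<Rightarrow> bool" where
  "ditree V A \<longleftrightarrow> digraph V A \<and> V \<noteq> {}
     \<and> (\<forall>u\<in>V. \<forall>v\<in>V. (u, v) \<in> (A \<union> A\<inverse>)\<^sup>*)
     \<and> (\<nexists>c. ucycle A c)"

definition strongly_connected_set :: "('a \<times> 'a) set \<Rightarrow> 'a set \<Rightarrow> bool" where
  "strongly_connected_set A S \<longleftrightarrow> (\<forall>u\<in>S. \<forall>v\<in>S. (u, v) \<in> A\<^sup>*)"

definition strong_component :: "'a set \<Rightarrow> ('a \<times> 'a) set \<Rightarrow> 'a set \<Rightarrow> bool" where
  "strong_component V A S \<longleftrightarrow> S \<subseteq> V \<and> S \<noteq> {} \<and> strongly_connected_set A S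
     \<and> (\<forall>S'. S \<subseteq> S' \<and> S' \<subseteq> V \<and> strongly_connected_set A S' \<longrightarrow> S' = S)"

definition in_nbhd :: "'a set \<Rightarrow> ('a \<times> 'a) set \<Rightarrow> 'a set \<Rightarrow> 'a set" where
  "in_nbhd V A S = {x \<in> V - S. \<exists>y\<in>S. (x, y) \<in> A}"

definition out_nbhd :: "'a set \<Rightarrow> ('a \<times> 'a) set \<Rightarrow> 'a set \<Rightarrow> 'a set" where
  "out_nbhd V A S = {x \<in> V - S. \<exists>y\<in>S. (y, x) \<in> A}"

definition source_set :: "'a set \<Rightarrow> ('a \<times> 'a) set \<Rightarrow> 'a set \<Rightarrow> bool" where
  "source_set V A S \<longleftrightarrow> strong_component V A S \<and> in_nbhd V A S - S = {}"

definition sink_set :: "'a set \<Rightarrow> ('a \<times> 'a) set \<Rightarrow> 'a set \<Rightarrow> bool" where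
  "sink_set V A S \<longleftrightarrow> strong_component V A S \<and> out_nbhd V A S - S = {}"

definition dipath :: "'a set \<Rightarrow> ('a \<times> 'a) set \<Rightarrow> 'a \<Rightarrow> 'a \<Rightarrow> 'a list \<Rightarrow> bool" where
  "dipath V A u v p \<longleftrightarrow> p \<noteq> [] \<and> hd p = u \<and> last p = v \<and> set p \<subseteq> V \<and> distinct p
     \<and> (\<forall>i. Suc i < length p \<longrightarrow> (p ! i, p ! Suc i) \<in> A)"

definition shortest_dipath :: "'a set \<Rightarrow> ('a \<times> 'a) set \<Rightarrow> 'a \<Rightarrow> 'a \<Rightarrow> 'a list \<Rightarrow> bool" where
  "shortest_dipath V A u v p \<longleftrightarrow> dipath V A u v p
     \<and> (\<forall>q. dipath V A u v q \<longrightarrow> length p \<le> length q)"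

definition interval :: "'a set \<Rightarrow> ('a \<times> 'a) set \<Rightarrow> 'a \<Rightarrow> 'a \<Rightarrow> 'a set" where
  "interval V A u v = {x. \<exists>p. shortest_dipath V A u v p \<and> x \<in> set p}"

definition interval_set :: "'a set \<Rightarrow> ('a \<times> 'a) set \<Rightarrow> 'a set \<Rightarrow> 'a set" where
  "interval_set V A S = (\<Union>u\<in>S. \<Union>v\<in>S. interval V A u v \<union> interval V A v u)"

definition geodetic_set :: "'a set \<Rightarrow> ('a \<times> 'a) set \<Rightarrow> 'a set \<Rightarrow> bool" where
  "geodetic_set V A S \<longleftrightarrow> S \<subseteq> V \<and> interval_set V A S = V"

end

theory Submission
  imports Defs
begin

lemma enter_idx:
  "hd p \<notin> S \<Longrightarrow> x \<in> set p \<Longrightarrow> x \<in> S \<Longrightarrow>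
   \<exists>i. Suc i < length p \<and> p ! i \<notin> S \<and> p ! Suc i \<in> S"
proof (induction p)
  case Nil then show ?case by simp
next
  case (Cons a p)
  then have "x \<in> set p" "p \<noteq> []" by auto
  show ?case
  proof (cases "hd p \<in> S")
    case True
    then show ?thesis using \<open>p \<noteq> []\<close> Cons.prems
      by (rule_tac x=0 in exI) (auto simp: hd_conv_nth)
  next
    case False
    then obtain i where "Suc i < length p \<and> p ! i \<notin> S \<and> p ! Suc i \<in> S"
      using Cons.IH \<open>x \<in> set p\<close> Cons.prems by blast
    then show ?thesis by (rule_tac x="Suc i" in exI) auto
  qed
qed

lemma leave_idx:
  "last p \<notin> S \<Longrightarrow> x \<in> set p \<Longrightarrow> x \<in> S \<Longrightarrow>
   \<exists>i. Suc i < length p \<and> p ! i \<in> S \<and> p ! Suc i \<notin> S"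
proof (induction p arbitrary: x)
  case Nil then show ?case by simp
next
  case (Cons a p)
  show ?case
  proof (cases "x = a")
    case True
    then have "p \<noteq> []" using Cons.prems by auto
    show ?thesis
    proof (cases "hd p \<in> S")
      case False
      then show ?thesis using \<open>p \<noteq> []\<close> Cons.prems True
        by (rule_tac x=0 in exI) (auto simp: hd_conv_nth)
    next
      case T: True
      then obtain i where "Suc i < length p \<and> p ! i \<in> S \<and> p ! Suc i \<notin> S"
        using Cons.IH[of "hd p"] \<open>p \<noteq> []\<close> Cons.prems by auto
      then show ?thesis by (rule_tac x="Suc i" in exI) auto
    qed
  next
    case False
    then have "x \<in> set p" "p \<noteq> []" using Cons.prems by auto
    then obtain i where "Suc i < length p \<and> p ! i \<in> S \<and> p ! Suc i \<notin> S"
      using Cons.IH[of x] Cons.prems by auto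
    then show ?thesis by (rule_tac x="Suc i" in exI) auto
  qed
qed

theorem lemma2:
  fixes V :: "'a set" and A :: "('a \<times> 'a) set" and S G :: "'a set"
  assumes "ditree V A"
    and "source_set V A S \<or> sink_set V A S"
    and "geodetic_set V A G"
  shows "G \<inter> S \<noteq> {}"
proof
  assume GS: "G \<inter> S = {}"
  have sc: "strong_component V A S" using assms(2) source_set_def sink_set_def by blast
  then obtain s where s: "s \<in> S" "S \<subseteq> V" unfolding strong_component_def by blast
  then have "s \<in> interval_set V A G" using assms(3) unfolding geodetic_set_def by blast
  then obtain u v p where uv: "u \<in> G" "v \<in> G" "shortest_dipath V A u v p" "s \<in> set p"
    unfolding interval_set_def interval_def by blast
  then have dp: "dipath V A u v p" unfolding shortest_dipath_def by blast
  have uS: "u \<notin> S" "v \<notin> S" using GS uv by auto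
  show False
  proof (cases "source_set V A S")
    case True
    obtain i where i: "Suc i < length p" "p ! i \<notin> S" "p ! Suc i \<in> S"
      using enter_idx[of p S s] dp uS s uv unfolding dipath_def by blast
    have "p ! i \<in> V" "(p ! i, p ! Suc i) \<in> A" using dp i unfolding dipath_def
      by (auto intro!: nth_mem)
    then have "p ! i \<in> in_nbhd V A S" using i unfolding in_nbhd_def by blast
    then show False using True i unfolding source_set_def by blast
  next
    case False
    then have sk: "sink_set V A S" using assms(2) by blast
    obtain i where i: "Suc i < length p" "p ! i \<in> S" "p ! Suc i \<notin> S"
      using leave_idx[of p S s] dp uS s uv unfolding dipath_def by blast
    have "p ! Suc i \<in> V" "(p ! i, p ! Suc i) \<in> A" using dp i unfolding dipath_def
      by (auto intro!: nth_mem)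
    then have "p ! Suc i \<in> out_nbhd V A S" using i unfolding out_nbhd_def by blast
    then show False using sk i unfolding sink_set_def by blast
  qed
qed

end
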